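(* Let $A_1,A_2\in M_2(\mathbb R)$ have no eigenvalues in $(-\infty,0]$ and satisfy $\operatorname{PD}(A_1)\subset\operatorname{PD}(A_2)$. Then $\|\log A_1\|_2\le\|\log A_2\|_2$ and $\lfloor\log A_1\rfloor_2\ge\lfloor\log A_2\rfloor_2$.
   Context: For $A=\tilde a\mathrm{Id}_2+\tilde b\tilde I+\tilde c\tilde J+\tilde d\tilde K$ (real coefficients, $\tilde I=\begin{pmatrix}0&-1\\1&0\end{pmatrix}$, $\tilde J=\begin{pmatrix}1&0\\0&-1\end{pmatrix}$, $\tilde K=\begin{pmatrix}0&1\\1&0\end{pmatrix}$), the principal disk is $\operatorname{PD}(A)=\overline D(\tilde a+|\tilde b|i,\sqrt{\tilde c^2+\tilde d^2})\subset\mathbb C$. $\|\cdot\|_2$ is the operator norm; $\lfloor X\rfloor_2=\det X/\|X\|_2$ for $X\ne0$, $\lfloor 0\rfloor_2=0$; $\log$ is the principal logarithm. *)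

theory Defs
  imports "HOL-Analysis.Analysis" "HOL-Library.Numeral_Type"
begin

type_synonym rmat2 = "real^2^2"

definition cmat :: "rmat2 \<Rightarrow> complex^2^2" where
  "cmat A = (\<chi> i j. complex_of_real (A $ i $ j))"

definition eigenvalues2 :: "rmat2 \<Rightarrow> complex set" where
  "eigenvalues2 A = {z. \<exists>v::complex^2. v \<noteq> 0 \<and> cmat A *v v = z *s v}"

primrec mpow :: "rmat2 \<Rightarrow> nat \<Rightarrow> rmat2" where
  "mpow L 0 = mat 1"
| "mpow L (Suc k) = L ** mpow L k"

definition mexp :: "rmat2 \<Rightarrow> rmat2" where
  "mexp L = (\<Sum>k. (1 / fact k) *\<^sub>R mpow L k)"

definition mlog :: "rmat2 \<Rightarrow> rmat2" where
  "mlog A = (THE L. mexp L = A \<and> (\<forall>z \<in> eigenvalues2 L. \<bar>Im z\<bar> < pi))"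

definition opnorm2 :: "rmat2 \<Rightarrow> real" where
  "opnorm2 X = onorm (\<lambda>x. X *v x)"

definition floor2 :: "rmat2 \<Rightarrow> real" where
  "floor2 X = (if X = 0 then 0 else det X / opnorm2 X)"

text \<open>Coordinates w.r.t. Id, I~, J~, K~:
  A = a Id + b I~ + c J~ + d K~ means A11 = a+c, A12 = d-b, A21 = b+d, A22 = a-c.\<close>
definition coef_a :: "rmat2 \<Rightarrow> real" where "coef_a A = (A$1$1 + A$2$2) / 2"
definition coef_b :: "rmat2 \<Rightarrow> real" where "coef_b A = (A$2$1 - A$1$2) / 2"
definition coef_c :: "rmat2 \<Rightarrow> real" where "coef_c A = (A$1$1 - A$2$2) / 2"
definition coef_d :: "rmat2 \<Rightarrow> real" where "coef_d A = (A$1$2 + A$2$1) / 2"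

definition PD :: "rmat2 \<Rightarrow> complex set" where
  "PD A = cball (Complex (coef_a A) \<bar>coef_b A\<bar>) (sqrt ((coef_c A)\<^sup>2 + (coef_d A)\<^sup>2))"

end

theory Submission
  imports Defs
begin

lemma mat1_entries[simp]: "(mat 1 :: rmat2)$1$1 = 1" "(mat 1::rmat2)$1$2 = 0"
  "(mat 1::rmat2)$2$1 = 0" "(mat 1 :: rmat2)$2$2 = 1"
  by (simp_all add: mat_def)

lemma mat_eq2: "(X::rmat2) = Y \<longleftrightarrow> X$1$1 = Y$1$1 \<and> X$1$2 = Y$1$2 \<and> X$2$1 = Y$2$1 \<and> X$2$2 = Y$2$2"
  by (auto simp: vec_eq_iff forall_2)

lemma mmult2: "((X::rmat2) ** Y)$i$j = X$i$1 * Y$1$j + X$i$2*Y$2$j"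
  by (simp add: matrix_matrix_mult_def sum_2)

lemma matrix_add_rdistrib: "((A::rmat2) + B) ** C = A ** C + B ** C"
  by (vector matrix_matrix_mult_def sum.distrib[symmetric] field_simps)

primrec pq :: "real \<Rightarrow> real \<Rightarrow> nat \<Rightarrow> real \<times> real" where
  "pq x \<sigma> 0 = (1, 0)"
| "pq x \<sigma> (Suc n) = (x * fst (pq x \<sigma> n) + \<sigma> * snd (pq x \<sigma> n), fst (pq x \<sigma> n) + x * snd (pq x \<sigma> n))"

lemma mpow_pq:
  assumes "M ** M = \<sigma> *\<^sub>R mat 1"
  shows "mpow (x *\<^sub>R mat 1 + M) n = fst (pq x \<sigma> n) *\<^sub>R mat 1 + snd (pq x \<sigma> n) *\<^sub>R M"
proof (induction n)
  case 0 then show ?case by simp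
next
  case (Suc n)
  let ?p = "fst (pq x \<sigma> n)" and ?q = "snd (pq x \<sigma> n)"
  have "(x *\<^sub>R mat 1 + M) ** (?p *\<^sub>R mat 1 + ?q *\<^sub>R M)
      = (x * ?p) *\<^sub>R mat 1 + (x * ?q) *\<^sub>R M + ?p *\<^sub>R M + ?q *\<^sub>R (M ** M)"
    by (simp add: matrix_add_ldistrib matrix_add_rdistrib matrix_scalar_ac
        scalar_matrix_assoc[symmetric] algebra_simps)
  also have "\<dots> = (x * ?p + \<sigma> * ?q) *\<^sub>R mat 1 + (?p + x * ?q) *\<^sub>R M"
    using assms by (simp add: algebra_simps)
  finally show ?case using Suc by simp
qed

lemma pq_complex:
  assumes "\<omega>\<^sup>2 = complex_of_real \<sigma>"
  shows "(complex_of_real x + \<omega>)^n = of_real (fst (pq x \<sigma> n)) + of_real (snd (pq x \<sigma> n)) * \<omega>"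
proof (induction n)
  case 0 then show ?case by simp
next
  case (Suc n)
  then show ?case using assms by (simp add: algebra_simps power2_eq_square)
qed

lemma pq_bound:
  "\<bar>fst (pq x \<sigma> n)\<bar> \<le> (1 + \<bar>x\<bar> + \<bar>\<sigma>\<bar>)^n \<and> \<bar>snd (pq x \<sigma> n)\<bar> \<le> (1 + \<bar>x\<bar> + \<bar>\<sigma>\<bar>)^n"
proof (induction n)
  case 0 then show ?case by simp
next
  case (Suc n)
  let ?p = "fst (pq x \<sigma> n)" and ?q = "snd (pq x \<sigma> n)" and ?K = "(1 + \<bar>x\<bar> + \<bar>\<sigma>\<bar>)^n"
  have K0: "0 \<le> ?K" by simp
  have KK: "(1 + \<bar>x\<bar> + \<bar>\<sigma>\<bar>) * ?K = ?K + \<bar>x\<bar> * ?K + \<bar>\<sigma>\<bar> * ?K" by (simp add: algebra_simps)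
  have a: "\<bar>x * ?p\<bar> \<le> \<bar>x\<bar> * ?K" using Suc by (simp add: abs_mult mult_left_mono)
  have b: "\<bar>\<sigma> * ?q\<bar> \<le> \<bar>\<sigma>\<bar> * ?K" using Suc by (simp add: abs_mult mult_left_mono)
  have c: "\<bar>x * ?q\<bar> \<le> \<bar>x\<bar> * ?K" using Suc by (simp add: abs_mult mult_left_mono)
  have "\<bar>x * ?p + \<sigma> * ?q\<bar> \<le> \<bar>x * ?p\<bar> + \<bar>\<sigma> * ?q\<bar>" by (rule abs_triangle_ineq)
  also have "\<dots> \<le> (1 + \<bar>x\<bar> + \<bar>\<sigma>\<bar>) * ?K" using a b K0 KK by linarith
  finally have d: "\<bar>x * ?p + \<sigma> * ?q\<bar> \<le> (1 + \<bar>x\<bar> + \<bar>\<sigma>\<bar>) * ?K" .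
  have "\<bar>?p + x * ?q\<bar> \<le> \<bar>?p\<bar> + \<bar>x * ?q\<bar>" by (rule abs_triangle_ineq)
  also have "\<dots> \<le> (1 + \<bar>x\<bar> + \<bar>\<sigma>\<bar>) * ?K" using Suc c K0 KK
    by (smt (verit) abs_ge_zero mult_nonneg_nonneg)
  finally have e: "\<bar>?p + x * ?q\<bar> \<le> (1 + \<bar>x\<bar> + \<bar>\<sigma>\<bar>) * ?K" .
  from d e show ?case by simp
qed

lemma pq_summable:
  "summable (\<lambda>n. fst (pq x \<sigma> n) / fact n)" "summable (\<lambda>n. snd (pq x \<sigma> n) / fact n)"
proof -
  let ?K = "1 + \<bar>x\<bar> + \<bar>\<sigma>\<bar>"
  have S: "summable (\<lambda>n. inverse (fact n) * ?K^n)" by (rule summable_exp)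
  have b1: "norm (fst (pq x \<sigma> n) / fact n) \<le> inverse (fact n) * ?K^n" for n
  proof -
    have "norm (fst (pq x \<sigma> n) / fact n) = \<bar>fst (pq x \<sigma> n)\<bar> * inverse (fact n)"
      by (simp add: divide_inverse abs_mult)
    also have "\<dots> \<le> ?K^n * inverse (fact n)"
      by (rule mult_right_mono) (use pq_bound in auto)
    finally show ?thesis by (simp add: mult.commute)
  qed
  have b2: "norm (snd (pq x \<sigma> n) / fact n) \<le> inverse (fact n) * ?K^n" for n
  proof -
    have "norm (snd (pq x \<sigma> n) / fact n) = \<bar>snd (pq x \<sigma> n)\<bar> * inverse (fact n)"
      by (simp add: divide_inverse abs_mult)
    also have "\<dots> \<le> ?K^n * inverse (fact n)"
      by (rule mult_right_mono) (use pq_bound in auto)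
    finally show ?thesis by (simp add: mult.commute)
  qed
  show "summable (\<lambda>n. fst (pq x \<sigma> n) / fact n)"
    by (rule summable_comparison_test[OF _ S]) (use b1 in blast)
  show "summable (\<lambda>n. snd (pq x \<sigma> n) / fact n)"
    by (rule summable_comparison_test[OF _ S]) (use b2 in blast)
qed

lemma pq_zero: "fst (pq x 0 n) = x^n \<and> snd (pq x 0 (Suc n)) = of_nat (Suc n) * x^n"
  by (induction n) (auto simp: algebra_simps)

lemma mexp_form:
  fixes x \<sigma> :: real and M :: rmat2
  assumes "M ** M = \<sigma> *\<^sub>R mat 1"
  obtains P Q where "mexp (x *\<^sub>R mat 1 + M) = P *\<^sub>R mat 1 + Q *\<^sub>R M"
    and "\<And>\<omega>::complex. \<omega>\<^sup>2 = of_real \<sigma> \<Longrightarrow> exp (of_real x + \<omega>) = of_real P + of_real Q * \<omega>"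
    and "\<sigma> = 0 \<Longrightarrow> Q = exp x"
proof -
  define P where "P = (\<Sum>n. fst (pq x \<sigma> n) / fact n)"
  define Q where "Q = (\<Sum>n. snd (pq x \<sigma> n) / fact n)"
  have sP: "(\<lambda>n. fst (pq x \<sigma> n) / fact n) sums P" unfolding P_def using pq_summable by (simp add: summable_sums)
  have sQ: "(\<lambda>n. snd (pq x \<sigma> n) / fact n) sums Q" unfolding Q_def using pq_summable by (simp add: summable_sums)
  have "(\<lambda>n. (fst (pq x \<sigma> n) / fact n) *\<^sub>R mat 1 + (snd (pq x \<sigma> n) / fact n) *\<^sub>R M) sums (P *\<^sub>R mat 1 + Q *\<^sub>R (M::rmat2))"
    by (intro sums_add sums_scaleR_left sP sQ)
  moreover have "(\<lambda>n. (fst (pq x \<sigma> n) / fact n) *\<^sub>R mat 1 + (snd (pq x \<sigma> n) / fact n) *\<^sub>R M)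
      = (\<lambda>n. (1 / fact n) *\<^sub>R mpow (x *\<^sub>R mat 1 + M) n)"
    by (rule ext, simp add: mpow_pq[OF assms] scaleR_add_right divide_inverse mult.commute)
  ultimately have 1: "mexp (x *\<^sub>R mat 1 + M) = P *\<^sub>R mat 1 + Q *\<^sub>R M"
    unfolding mexp_def by (simp add: sums_unique[symmetric])
  have 2: "exp (of_real x + \<omega>) = of_real P + of_real Q * \<omega>" if w: "\<omega>\<^sup>2 = of_real \<sigma>" for \<omega> :: complex
  proof -
    have "(\<lambda>n. complex_of_real (fst (pq x \<sigma> n) / fact n) + complex_of_real (snd (pq x \<sigma> n) / fact n) * \<omega>)
          sums (of_real P + of_real Q * \<omega>)"
      by (intro sums_add sums_mult2 sums_of_real sP sQ)
    moreover have "(\<lambda>n. complex_of_real (fst (pq x \<sigma> n) / fact n) + complex_of_real (snd (pq x \<sigma> n) / fact n) * \<omega>)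
        = (\<lambda>n. (of_real x + \<omega>)^n /\<^sub>R fact n)"
      by (rule ext, subst pq_complex[OF w], simp add: scaleR_conv_of_real divide_inverse algebra_simps)
    ultimately have "(\<lambda>n. (of_real x + \<omega>)^n /\<^sub>R fact n) sums (of_real P + of_real Q * \<omega>)" by simp
    then show ?thesis using exp_converges[of "of_real x + \<omega>"] by (rule sums_unique2[symmetric])
  qed
  have 3: "Q = exp x" if "\<sigma> = 0"
  proof -
    have "snd (pq x \<sigma> (Suc n)) / fact (Suc n) = x^n /\<^sub>R fact n" for n
    proof -
      have h: "snd (pq x \<sigma> (Suc n)) = of_nat (Suc n) * x^n" using that pq_zero by blast
      have "snd (pq x \<sigma> (Suc n)) / fact (Suc n) = of_nat (Suc n) * x^n / (of_nat (Suc n) * fact n)"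
        by (simp only: h fact_Suc of_nat_mult)
      also have "\<dots> = x^n /\<^sub>R fact n" by (simp add: divide_inverse)
      finally show ?thesis .
    qed
    then have "(\<lambda>n. snd (pq x \<sigma> (Suc n)) / fact (Suc n)) = (\<lambda>n. x^n /\<^sub>R fact n)" by (rule ext)
    then have "(\<lambda>n. snd (pq x \<sigma> (Suc n)) / fact (Suc n)) sums exp x" using exp_converges[of x] by simp
    then have "(\<lambda>n. snd (pq x \<sigma> n) / fact n) sums (exp x + snd (pq x \<sigma> 0) / fact 0)"
      by (rule sums_Suc_iff[THEN iffD1])
    then have "(\<lambda>n. snd (pq x \<sigma> n) / fact n) sums (exp x)" by simp
    then show ?thesis using sQ by (rule sums_unique2[symmetric])
  qed
  show ?thesis using 1 2 3 that by blast
qed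

lemma cmat_mult: "(cmat L *v v)$i = of_real (L$i$1) * v$1 + of_real (L$i$2) * v$2"
  by (simp add: cmat_def matrix_vector_mult_def sum_2)

lemma cvec_eq2: "(v::complex^2) = w \<longleftrightarrow> v$1 = w$1 \<and> v$2 = w$2"
  by (auto simp: vec_eq_iff forall_2)

lemma eig_char:
  "z \<in> eigenvalues2 L \<longleftrightarrow>
   (z - of_real (L$1$1)) * (z - of_real (L$2$2)) = of_real (L$1$2 * L$2$1)"
proof
  assume "z \<in> eigenvalues2 L"
  then obtain v :: "complex^2" where v0: "v \<noteq> 0" and ev: "cmat L *v v = z *s v"
    by (auto simp: eigenvalues2_def)
  define p where "p = complex_of_real (L$1$1)"
  define q where "q = complex_of_real (L$1$2)"
  define r where "r = complex_of_real (L$2$1)"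
  define u where "u = complex_of_real (L$2$2)"
  have e1: "(z - p) * v$1 = q * v$2" using arg_cong[OF ev, of "\<lambda>w. w$1"]
    by (simp add: cmat_mult p_def q_def algebra_simps)
  have e2: "(z - u) * v$2 = r * v$1" using arg_cong[OF ev, of "\<lambda>w. w$2"]
    by (simp add: cmat_mult r_def u_def algebra_simps)
  have f1: "((z - p) * (z - u) - q * r) * v$1 = 0"
  proof -
    have "(z - p) * (z - u) * v$1 = (z - u) * ((z-p) * v$1)" by (simp add: algebra_simps)
    also have "\<dots> = q * ((z-u) * v$2)" using e1 by (simp add: algebra_simps)
    also have "\<dots> = q * r * v$1" using e2 by (simp add: algebra_simps)
    finally show ?thesis by (simp add: algebra_simps)
  qed
  have f2: "((z - p) * (z - u) - q * r) * v$2 = 0"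
  proof -
    have "(z - p) * (z - u) * v$2 = (z - p) * ((z-u) * v$2)" by (simp add: algebra_simps)
    also have "\<dots> = r * ((z-p) * v$1)" using e2 by (simp add: algebra_simps)
    also have "\<dots> = q * r * v$2" using e1 by (simp add: algebra_simps)
    finally show ?thesis by (simp add: algebra_simps)
  qed
  have "v$1 \<noteq> 0 \<or> v$2 \<noteq> 0" using v0 by (auto simp: vec_eq_iff forall_2)
  then have "(z - p) * (z - u) - q * r = 0" using f1 f2 by auto
  then show "(z - of_real (L$1$1)) * (z - of_real (L$2$2)) = of_real (L$1$2 * L$2$1)"
    by (simp add: p_def q_def r_def u_def)
next
  assume ch: "(z - of_real (L$1$1)) * (z - of_real (L$2$2)) = of_real (L$1$2 * L$2$1)"
  define p where "p = complex_of_real (L$1$1)"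
  define q where "q = complex_of_real (L$1$2)"
  define r where "r = complex_of_real (L$2$1)"
  define u where "u = complex_of_real (L$2$2)"
  have ch': "(z - p) * (z - u) = q * r" using ch by (simp add: p_def q_def r_def u_def)
  have ex: "\<exists>v::complex^2. v \<noteq> 0 \<and> cmat L *v v = z *s v"
  proof (cases "q = 0")
    case False
    define v :: "complex^2" where "v = vector [q, z - p]"
    have "v \<noteq> 0" using False by (auto simp: v_def vec_eq_iff forall_2)
    moreover have "cmat L *v v = z *s v"
      using ch' unfolding cvec_eq2
      by (simp add: cmat_mult v_def p_def[symmetric] q_def[symmetric] r_def[symmetric] u_def[symmetric] algebra_simps)
    ultimately show ?thesis by blast
  next
    case q0: True
    show ?thesis
    proof (cases "r = 0")
      case False
      define v :: "complex^2" where "v = vector [z - u, r]"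
      have "v \<noteq> 0" using False by (auto simp: v_def vec_eq_iff forall_2)
      moreover have "(z - p) * (z - u) = 0" using ch' q0 by simp
      then have "cmat L *v v = z *s v"
        using q0 unfolding cvec_eq2
        by (simp add: cmat_mult v_def p_def[symmetric] q_def[symmetric] r_def[symmetric] u_def[symmetric] algebra_simps)
      ultimately show ?thesis by blast
    next
      case r0: True
      have "z = p \<or> z = u" using ch' q0 by simp
      then show ?thesis
      proof
        assume zp: "z = p"
        define v :: "complex^2" where "v = vector [1, 0]"
        have "v \<noteq> 0" by (auto simp: v_def vec_eq_iff forall_2)
        moreover have "cmat L *v v = z *s v"
          using r0 zp unfolding cvec_eq2
          by (simp add: cmat_mult v_def p_def[symmetric] q_def[symmetric] r_def[symmetric] u_def[symmetric])
        ultimately show ?thesis by blast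
      next
        assume zu: "z = u"
        define v :: "complex^2" where "v = vector [0, 1]"
        have "v \<noteq> 0" by (auto simp: v_def vec_eq_iff forall_2)
        moreover have "cmat L *v v = z *s v"
          using q0 zu unfolding cvec_eq2
          by (simp add: cmat_mult v_def p_def[symmetric] q_def[symmetric] r_def[symmetric] u_def[symmetric])
        ultimately show ?thesis by blast
      qed
    qed
  qed
  then show "z \<in> eigenvalues2 L" by (simp add: eigenvalues2_def)
qed

definition ee :: "real \<Rightarrow> complex" where
  "ee s = (if 0 \<le> s then of_real (sqrt s) else \<i> * of_real (sqrt (-s)))"

definition lal :: "real \<Rightarrow> real \<Rightarrow> real" where
  "lal a s = (if s > 0 then (ln (a + sqrt s) + ln (a - sqrt s))/2 else if s = 0 then ln a
     else Re (Ln (Complex a (sqrt (-s)))))"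

definition lbe :: "real \<Rightarrow> real \<Rightarrow> real" where
  "lbe a s = (if s > 0 then (ln (a + sqrt s) - ln (a - sqrt s))/(2 * sqrt s) else if s = 0 then 1/a
     else Im (Ln (Complex a (sqrt (-s)))) / sqrt (-s))"

lemma ee_sq: "(ee s)^2 = of_real s"
proof (cases "0 \<le> s")
  case True then show ?thesis
    by (simp add: ee_def power2_eq_square flip: of_real_mult)
next
  case False
  have h: "(sqrt (-s))^2 = -s" using False by simp
  have "(\<i> * complex_of_real (sqrt (- s)))^2 = - complex_of_real ((sqrt (-s))^2)"
    by (simp add: power_mult_distrib)
  then show ?thesis by (simp add: h ee_def False)
qed

lemma ee_zero_iff: "ee s = 0 \<longleftrightarrow> s = 0"
  by (auto simp: ee_def)

lemma Kfacts:
  assumes adm: "0 \<le> s \<Longrightarrow> sqrt s < a"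
  shows "exp (of_real (lal a s) + of_real (lbe a s) * ee s) = of_real a + ee s"
    and "exp (of_real (lal a s) - of_real (lbe a s) * ee s) = of_real a - ee s"
    and "\<bar>Im (of_real (lal a s) + of_real (lbe a s) * ee s)\<bar> < pi"
    and "\<bar>Im (of_real (lal a s) - of_real (lbe a s) * ee s)\<bar> < pi"
    and "of_real a + ee s \<notin> \<real>\<^sub>\<le>\<^sub>0"
    and "of_real a - ee s \<notin> \<real>\<^sub>\<le>\<^sub>0"
proof -
  consider "s > 0" | "s = 0" | "s < 0" by linarith
  then have "exp (of_real (lal a s) + of_real (lbe a s) * ee s) = of_real a + ee s
    \<and> exp (of_real (lal a s) - of_real (lbe a s) * ee s) = of_real a - ee s
    \<and> \<bar>Im (of_real (lal a s) + of_real (lbe a s) * ee s)\<bar> < pi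
    \<and> \<bar>Im (of_real (lal a s) - of_real (lbe a s) * ee s)\<bar> < pi
    \<and> of_real a + ee s \<notin> \<real>\<^sub>\<le>\<^sub>0 \<and> of_real a - ee s \<notin> \<real>\<^sub>\<le>\<^sub>0"
  proof cases
    case 1
    have sa: "sqrt s < a" using adm 1 by simp
    have sp: "sqrt s > 0" using 1 by simp
    have ap: "a + sqrt s > 0" "a - sqrt s > 0" using sa sp by linarith+
    have e1: "lal a s + lbe a s * sqrt s = ln (a + sqrt s)"
      using 1 sp by (simp add: lal_def lbe_def field_simps)
    have e2: "lal a s - lbe a s * sqrt s = ln (a - sqrt s)"
      using 1 sp by (simp add: lal_def lbe_def field_simps)
    have x1: "of_real (lal a s) + of_real (lbe a s) * ee s = complex_of_real (ln (a + sqrt s))"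
      using 1 e1 by (simp add: ee_def flip: of_real_mult of_real_add)
    have x2: "of_real (lal a s) - of_real (lbe a s) * ee s = complex_of_real (ln (a - sqrt s))"
      using 1 e2 by (simp add: ee_def flip: of_real_mult of_real_diff)
    have y1: "of_real a + ee s = complex_of_real (a + sqrt s)" using 1 by (simp add: ee_def)
    have y2: "of_real a - ee s = complex_of_real (a - sqrt s)" using 1 by (simp add: ee_def)
    show ?thesis unfolding x1 x2 y1 y2
      using ap by (simp add: complex_nonpos_Reals_iff exp_of_real)
  next
    case 2
    have ap: "a > 0" using adm 2 by simp
    show ?thesis using 2 ap
      by (simp add: ee_def lal_def lbe_def complex_nonpos_Reals_iff exp_of_real)
  next
    case 3
    define w where "w = sqrt (-s)"
    have wp: "w > 0" using 3 by (simp add: w_def)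
    define l where "l = Complex a w"
    have l0: "l \<notin> \<real>\<^sub>\<le>\<^sub>0" using wp by (simp add: l_def complex_nonpos_Reals_iff)
    have ln0: "l \<noteq> 0"
    proof
      assume "l = 0" then have "Im l = 0" by simp
      with wp show False by (simp add: l_def)
    qed
    have ee3: "ee s = \<i> * of_real w" using 3 by (simp add: ee_def w_def)
    have x1: "of_real (lal a s) + of_real (lbe a s) * ee s = Ln l"
      using 3 wp by (simp add: lal_def lbe_def ee3 complex_eq_iff l_def w_def)
    have x2: "of_real (lal a s) - of_real (lbe a s) * ee s = cnj (Ln l)"
      using 3 wp by (simp add: lal_def lbe_def ee3 complex_eq_iff l_def w_def)
    have y1: "of_real a + ee s = l" by (simp add: ee3 l_def complex_eq_iff)
    have y2: "of_real a - ee s = cnj l" by (simp add: ee3 l_def complex_eq_iff)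
    have i1: "Im (Ln l) < pi" using l0 by (rule Im_Ln_less_pi)
    have i2: "- pi < Im (Ln l)" using ln0 by (rule mpi_less_Im_Ln)
    have c0: "cnj l \<notin> \<real>\<^sub>\<le>\<^sub>0" using wp by (simp add: l_def complex_nonpos_Reals_iff)
    have ex1: "exp (Ln l) = l" using ln0 by (rule exp_Ln)
    have ex2: "exp (cnj (Ln l)) = cnj l" using ex1 by (simp add: exp_cnj[symmetric])
    show ?thesis unfolding x1 x2 y1 y2
      using i1 i2 ex1 ex2 l0 c0 by simp
  qed
  then show "exp (of_real (lal a s) + of_real (lbe a s) * ee s) = of_real a + ee s"
    and "exp (of_real (lal a s) - of_real (lbe a s) * ee s) = of_real a - ee s"
    and "\<bar>Im (of_real (lal a s) + of_real (lbe a s) * ee s)\<bar> < pi"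
    and "\<bar>Im (of_real (lal a s) - of_real (lbe a s) * ee s)\<bar> < pi"
    and "of_real a + ee s \<notin> \<real>\<^sub>\<le>\<^sub>0"
    and "of_real a - ee s \<notin> \<real>\<^sub>\<le>\<^sub>0" by blast+
qed

lemma Kln:
  assumes adm: "0 \<le> s \<Longrightarrow> sqrt s < a"
  shows "Ln (of_real a + ee s) = of_real (lal a s) + of_real (lbe a s) * ee s"
    and "Ln (of_real a - ee s) = of_real (lal a s) - of_real (lbe a s) * ee s"
  using Kfacts[OF adm] by (auto intro!: Ln_unique)

lemma seg_nonpos:
  fixes l :: complex and t :: real
  assumes "l \<notin> \<real>\<^sub>\<le>\<^sub>0" "0 \<le> t" "t \<le> 1"
  shows "1 + of_real t * (l - 1) \<notin> \<real>\<^sub>\<le>\<^sub>0"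
proof
  assume h: "1 + of_real t * (l - 1) \<in> \<real>\<^sub>\<le>\<^sub>0"
  then have i: "t * Im l = 0" and r: "1 + t * (Re l - 1) \<le> 0"
    by (auto simp: complex_nonpos_Reals_iff)
  show False
  proof (cases "t = 0")
    case True then show False using r by simp
  next
    case False
    then have "Im l = 0" using i by simp
    then have "Re l > 0" using assms(1) by (auto simp: complex_nonpos_Reals_iff)
    then have "t * Re l > 0" using assms(2) False by simp
    then have "t * (Re l - 1) > - 1" using assms(3) by (simp add: algebra_simps)
    then show False using r by simp
  qed
qed

lemma Pt_pos:
  assumes adm: "0 \<le> s \<Longrightarrow> sqrt s < a" and t: "0 \<le> t" "t \<le> 1"
  shows "0 < (1 + t * (a - 1))\<^sup>2 - t\<^sup>2 * s"
proof (cases "0 \<le> s")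
  case True
  have sa: "sqrt s < a" using adm True by simp
  have f: "(1 + t * (a - 1))\<^sup>2 - t\<^sup>2 * s = ((1 - t) + t * (a - sqrt s)) * ((1 - t) + t * (a + sqrt s))"
    using True by (simp add: power2_eq_square algebra_simps)
  have p1: "0 < (1 - t) + t * (a - sqrt s)"
  proof (cases "t = 0")
    case True then show ?thesis by simp
  next
    case False then have "0 < t * (a - sqrt s)" using t sa by simp
    then show ?thesis using t by simp
  qed
  have p2: "0 < (1 - t) + t * (a + sqrt s)"
  proof -
    have "t * (a - sqrt s) \<le> t * (a + sqrt s)" by (rule mult_left_mono) (use t True in auto)
    then show ?thesis using p1 by simp
  qed
  show ?thesis unfolding f using p1 p2 by simp
next
  case False
  show ?thesis
  proof (cases "t = 0")
    case True then show ?thesis by simp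
  next
    case tn: False
    have "0 < t\<^sup>2" using tn by simp
    then have "0 < t\<^sup>2 * (- s)" using False by (intro mult_pos_pos) auto
    then have "0 < - (t\<^sup>2 * s)" by simp
    moreover have "0 \<le> (1 + t * (a - 1))\<^sup>2" by simp
    ultimately show ?thesis by linarith
  qed
qed

lemma ftc_ln:
  fixes l :: complex
  assumes l: "l \<notin> \<real>\<^sub>\<le>\<^sub>0"
  shows "((\<lambda>t. (l - 1) / (1 + of_real t * (l - 1))) has_integral Ln l) {0..1}"
proof -
  have d: "((\<lambda>t. Ln (1 + of_real t * (l - 1))) has_vector_derivative
            (inverse (1 + of_real x * (l - 1)) * (l - 1))) (at x within {0..1})"
    if x: "x \<in> {0..1}" for x
  proof -
    have nz: "1 + of_real x * (l - 1) \<notin> \<real>\<^sub>\<le>\<^sub>0" using seg_nonpos[OF l] x by auto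
    have "((\<lambda>z. Ln (1 + z * (l - 1))) has_field_derivative
           (inverse (1 + of_real x * (l - 1)) * (l - 1))) (at (of_real x))"
      by (rule DERIV_chain2[where g="\<lambda>z. 1 + z * (l - 1)" and x="of_real x", OF has_field_derivative_Ln[OF nz]])
         (auto intro!: derivative_eq_intros)
    then show ?thesis by (rule has_vector_derivative_real_field)
  qed
  have "((\<lambda>x. inverse (1 + of_real x * (l - 1)) * (l - 1)) has_integral
         (Ln (1 + of_real 1 * (l - 1)) - Ln (1 + of_real 0 * (l - 1)))) {0..1}"
    by (rule fundamental_theorem_of_calculus[OF _ d]) auto
  then show ?thesis by (simp add: divide_inverse mult.commute)
qed

lemma has_integral_Re_of_real:
  assumes "((\<lambda>t. complex_of_real (f t)) has_integral complex_of_real c) S"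
  shows "(f has_integral c) S"
  using has_integral_linear[OF assms bounded_linear_Re] by (simp add: o_def)

lemma integ_g:
  assumes adm: "0 \<le> s \<Longrightarrow> sqrt s < a"
  shows "((\<lambda>t. ((a - 1) * (1 + t * (a - 1)) - t * s) / ((1 + t * (a - 1))\<^sup>2 - t\<^sup>2 * s))
           has_integral lal a s) {0..1}"
proof -
  define e where "e = ee s"
  define l where "l = complex_of_real a + e"
  define m where "m = complex_of_real a - e"
  have esq: "e * e = of_real s" using ee_sq[of s] by (simp add: e_def power2_eq_square)
  have l0: "l \<notin> \<real>\<^sub>\<le>\<^sub>0" and m0: "m \<notin> \<real>\<^sub>\<le>\<^sub>0" using Kfacts(5,6)[OF adm] by (simp_all add: l_def m_def e_def)
  have I: "((\<lambda>t. ((l - 1) / (1 + of_real t * (l - 1)) + (m - 1) / (1 + of_real t * (m - 1))) / 2)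
           has_integral ((Ln l + Ln m) / 2)) {0..1}"
    by (intro has_integral_divide has_integral_add ftc_ln l0 m0)
  have LL: "(Ln l + Ln m) / 2 = complex_of_real (lal a s)"
    using Kln[OF adm] by (simp add: l_def m_def e_def field_simps)
  have eq: "((l - 1) / (1 + of_real t * (l - 1)) + (m - 1) / (1 + of_real t * (m - 1))) / 2
      = complex_of_real (((a - 1) * (1 + t * (a - 1)) - t * s) / ((1 + t * (a - 1))\<^sup>2 - t\<^sup>2 * s))"
    if t: "t \<in> {0..1}" for t
  proof -
    have g1: "1 + of_real t * (l - 1) \<noteq> 0" using seg_nonpos[OF l0, of t] t by auto
    have g2: "1 + of_real t * (m - 1) \<noteq> 0" using seg_nonpos[OF m0, of t] t by auto
    have P: "(1 + of_real t * (l - 1)) * (1 + of_real t * (m - 1))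
            = complex_of_real ((1 + t * (a - 1))\<^sup>2 - t\<^sup>2 * s)"
    proof -
      have "(1 + of_real t * (l - 1)) * (1 + of_real t * (m - 1))
          = (1 + of_real t * (of_real a - 1))^2 - (of_real t)^2 * (e * e)"
        unfolding l_def m_def by (simp add: algebra_simps power2_eq_square)
      then show ?thesis by (simp add: esq)
    qed
    have N: "(l - 1) * (1 + of_real t * (m - 1)) + (m - 1) * (1 + of_real t * (l - 1))
            = 2 * complex_of_real ((a - 1) * (1 + t * (a - 1)) - t * s)"
    proof -
      have "(l - 1) * (1 + of_real t * (m - 1)) + (m - 1) * (1 + of_real t * (l - 1))
          = 2 * ((of_real a - 1) * (1 + of_real t * (of_real a - 1)) - of_real t * (e * e))"
        unfolding l_def m_def by (simp add: algebra_simps)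
      then show ?thesis by (simp add: esq)
    qed
    have "((l - 1) / (1 + of_real t * (l - 1)) + (m - 1) / (1 + of_real t * (m - 1))) / 2
        = ((l - 1) * (1 + of_real t * (m - 1)) + (m - 1) * (1 + of_real t * (l - 1)))
          / (2 * ((1 + of_real t * (l - 1)) * (1 + of_real t * (m - 1))))"
      using g1 g2 by (simp add: field_simps)
    also have "\<dots> = complex_of_real ((a - 1) * (1 + t * (a - 1)) - t * s) / complex_of_real ((1 + t * (a - 1))\<^sup>2 - t\<^sup>2 * s)"
      unfolding N P by (rule mult_divide_mult_cancel_left) simp
    finally show ?thesis by (simp only: of_real_divide of_real_1)
  qed
  have "((\<lambda>t. complex_of_real (((a - 1) * (1 + t * (a - 1)) - t * s) / ((1 + t * (a - 1))\<^sup>2 - t\<^sup>2 * s)))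
        has_integral complex_of_real (lal a s)) {0..1}"
    using has_integral_eq[OF eq I] LL by simp
  then show ?thesis by (rule has_integral_Re_of_real)
qed

lemma integ_h:
  assumes adm: "0 \<le> s \<Longrightarrow> sqrt s < a"
  shows "((\<lambda>t. 1 / ((1 + t * (a - 1))\<^sup>2 - t\<^sup>2 * s)) has_integral lbe a s) {0..1}"
proof (cases "s = 0")
  case True
  have a0: "a > 0" using adm True by simp
  have pos: "1 + t * (a - 1) > 0" if "t \<in> {0..1}" for t
  proof (cases "t = 0")
    case False
    have "0 < t * a" using that False a0 by simp
    moreover have "1 + t * (a - 1) = (1 - t) + t * a" by (simp add: algebra_simps)
    ultimately show ?thesis using that by simp
  qed simp
  have d: "((\<lambda>t. t / (1 + t * (a - 1))) has_vector_derivative 1 / (1 + x * (a - 1))\<^sup>2) (at x within {0..1})"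
    if x: "x \<in> {0..1}" for x
  proof -
    have nz: "1 + x * (a - 1) \<noteq> 0" using pos[OF x] by simp
    have "((\<lambda>t. t / (1 + t * (a - 1))) has_real_derivative 1 / (1 + x * (a - 1))\<^sup>2) (at x within {0..1})"
      by (rule derivative_eq_intros refl | use nz in \<open>simp add: field_simps power2_eq_square\<close>)+
    then show ?thesis by (simp add: has_real_derivative_iff_has_vector_derivative)
  qed
  have "((\<lambda>x. 1 / (1 + x * (a - 1))\<^sup>2) has_integral (1 / (1 + 1 * (a - 1)) - 0 / (1 + 0 * (a - 1)))) {0..1}"
    by (rule fundamental_theorem_of_calculus[OF _ d]) auto
  then show ?thesis using True by (simp add: lbe_def)
next
  case False
  define e where "e = ee s"
  define l where "l = complex_of_real a + e"
  define m where "m = complex_of_real a - e"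
  have esq: "e * e = of_real s" using ee_sq[of s] by (simp add: e_def power2_eq_square)
  have e0: "e \<noteq> 0" using False ee_zero_iff by (simp add: e_def)
  have l0: "l \<notin> \<real>\<^sub>\<le>\<^sub>0" and m0: "m \<notin> \<real>\<^sub>\<le>\<^sub>0" using Kfacts(5,6)[OF adm] by (simp_all add: l_def m_def e_def)
  have I: "((\<lambda>t. ((l - 1) / (1 + of_real t * (l - 1)) - (m - 1) / (1 + of_real t * (m - 1))) / (2 * e))
           has_integral ((Ln l - Ln m) / (2 * e))) {0..1}"
    by (intro has_integral_divide has_integral_diff ftc_ln l0 m0)
  have LL: "(Ln l - Ln m) / (2 * e) = complex_of_real (lbe a s)"
    using Kln[OF adm] e0 by (simp add: l_def m_def e_def field_simps)
  have eq: "((l - 1) / (1 + of_real t * (l - 1)) - (m - 1) / (1 + of_real t * (m - 1))) / (2 * e)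
      = complex_of_real (1 / ((1 + t * (a - 1))\<^sup>2 - t\<^sup>2 * s))"
    if t: "t \<in> {0..1}" for t
  proof -
    have g1: "1 + of_real t * (l - 1) \<noteq> 0" using seg_nonpos[OF l0, of t] t by auto
    have g2: "1 + of_real t * (m - 1) \<noteq> 0" using seg_nonpos[OF m0, of t] t by auto
    have P: "(1 + of_real t * (l - 1)) * (1 + of_real t * (m - 1))
            = complex_of_real ((1 + t * (a - 1))\<^sup>2 - t\<^sup>2 * s)"
    proof -
      have "(1 + of_real t * (l - 1)) * (1 + of_real t * (m - 1))
          = (1 + of_real t * (of_real a - 1))^2 - (of_real t)^2 * (e * e)"
        unfolding l_def m_def by (simp add: algebra_simps power2_eq_square)
      then show ?thesis by (simp add: esq)
    qed
    have N: "(l - 1) * (1 + of_real t * (m - 1)) - (m - 1) * (1 + of_real t * (l - 1)) = 2 * e"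
      unfolding l_def m_def by (simp add: algebra_simps)
    have "((l - 1) / (1 + of_real t * (l - 1)) - (m - 1) / (1 + of_real t * (m - 1))) / (2 * e)
        = ((l - 1) * (1 + of_real t * (m - 1)) - (m - 1) * (1 + of_real t * (l - 1)))
          / (2 * e * ((1 + of_real t * (l - 1)) * (1 + of_real t * (m - 1))))"
      using g1 g2 e0 by (simp add: field_simps)
    also have "\<dots> = 1 / complex_of_real ((1 + t * (a - 1))\<^sup>2 - t\<^sup>2 * s)"
      unfolding N P using e0 by simp
    finally show ?thesis by (simp only: of_real_divide of_real_1)
  qed
  have "((\<lambda>t. complex_of_real (1 / ((1 + t * (a - 1))\<^sup>2 - t\<^sup>2 * s)))
        has_integral complex_of_real (lbe a s)) {0..1}"
    using has_integral_eq[OF eq I] LL by simp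
  then show ?thesis by (rule has_integral_Re_of_real)
qed

lemma key_identity:
  fixes a1 a2 B1 B2 r1 r2 t :: real
  assumes P1: "(1 + t * (a1 - 1))^2 - t^2 * (r1^2 - B1^2) \<noteq> 0"
      and P2: "(1 + t * (a2 - 1))^2 - t^2 * (r2^2 - B2^2) \<noteq> 0"
  shows "(((a1 - 1) * (1 + t * (a1 - 1)) - t * (r1^2 - B1^2)) / ((1 + t * (a1 - 1))^2 - t^2 * (r1^2 - B1^2))
        - ((a2 - 1) * (1 + t * (a2 - 1)) - t * (r2^2 - B2^2)) / ((1 + t * (a2 - 1))^2 - t^2 * (r2^2 - B2^2)))^2
       + (B1 * (1 / ((1 + t * (a1 - 1))^2 - t^2 * (r1^2 - B1^2))) - B2 * (1 / ((1 + t * (a2 - 1))^2 - t^2 * (r2^2 - B2^2))))^2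
       - (r2 * (1 / ((1 + t * (a2 - 1))^2 - t^2 * (r2^2 - B2^2))) - r1 * (1 / ((1 + t * (a1 - 1))^2 - t^2 * (r1^2 - B1^2))))^2
     = (1 / ((1 + t * (a1 - 1))^2 - t^2 * (r1^2 - B1^2))) * (1 / ((1 + t * (a2 - 1))^2 - t^2 * (r2^2 - B2^2)))
       * ((a1 - a2)^2 + (B1 - B2)^2 - (r2 - r1)^2)"
proof -
  define P1' where "P1' = (1 + t * (a1 - 1))^2 - t^2 * (r1^2 - B1^2)"
  define P2' where "P2' = (1 + t * (a2 - 1))^2 - t^2 * (r2^2 - B2^2)"
  define N1 where "N1 = (a1 - 1) * (1 + t * (a1 - 1)) - t * (r1^2 - B1^2)"
  define N2 where "N2 = (a2 - 1) * (1 + t * (a2 - 1)) - t * (r2^2 - B2^2)"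
  have p1: "P1' \<noteq> 0" and p2: "P2' \<noteq> 0" using P1 P2 by (simp_all add: P1'_def P2'_def)
  have poly: "(N1 * P2' - N2 * P1')^2 + (B1 * P2' - B2 * P1')^2 - (r2 * P1' - r1 * P2')^2
      = P1' * P2' * ((a1 - a2)^2 + (B1 - B2)^2 - (r2 - r1)^2)"
    unfolding P1'_def P2'_def N1_def N2_def by algebra
  have d1: "N1 / P1' - N2 / P2' = (N1 * P2' - N2 * P1') / (P1' * P2')"
    using p1 p2 by (simp add: field_simps)
  have d2: "B1 * (1 / P1') - B2 * (1 / P2') = (B1 * P2' - B2 * P1') / (P1' * P2')"
    using p1 p2 by (simp add: field_simps)
  have d3: "r2 * (1 / P2') - r1 * (1 / P1') = (r2 * P1' - r1 * P2') / (P1' * P2')"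
    using p1 p2 by (simp add: field_simps)
  have w: "P1' * P2' \<noteq> 0" using p1 p2 by simp
  have "(N1 / P1' - N2 / P2')^2 + (B1 * (1 / P1') - B2 * (1 / P2'))^2 - (r2 * (1 / P2') - r1 * (1 / P1'))^2
      = ((N1 * P2' - N2 * P1')^2 + (B1 * P2' - B2 * P1')^2 - (r2 * P1' - r1 * P2')^2) / (P1' * P2')^2"
    unfolding d1 d2 d3 power_divide by (simp add: add_divide_distrib diff_divide_distrib)
  also have "\<dots> = (P1' * P2') * ((a1 - a2)^2 + (B1 - B2)^2 - (r2 - r1)^2) / ((P1' * P2') * (P1' * P2'))"
    unfolding poly by (simp add: power2_eq_square)
  also have "\<dots> = (1 / P1') * (1 / P2') * ((a1 - a2)^2 + (B1 - B2)^2 - (r2 - r1)^2)"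
    using w by simp
  finally show ?thesis unfolding P1'_def P2'_def N1_def N2_def .
qed

lemma rad_mono:
  fixes c1 c2 :: complex and R1 R2 :: real
  assumes "cmod (c1 - c2) \<le> R2 - R1" "0 \<le> R1" "R2^2 < (cmod c2)^2"
  shows "R1 * ((cmod c2)^2 - R2^2) \<le> R2 * ((cmod c1)^2 - R1^2)"
proof -
  define n1 where "n1 = cmod c1"
  define n2 where "n2 = cmod c2"
  define d where "d = R2 - R1"
  have "n2 \<le> n1 + cmod (c2 - c1)" unfolding n1_def n2_def by (rule norm_triangle_sub)
  then have t: "n2 \<le> n1 + d" using assms(1) by (simp add: d_def norm_minus_commute)
  have n2: "0 \<le> n2" by (simp add: n2_def)
  have "n2^2 \<le> (n1 + d)^2" using t n2 by (simp add: power_mono)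
  then have a: "R1 * n2^2 \<le> R1 * (n1 + d)^2" using assms(2) by (simp add: mult_left_mono)
  have b: "R2 * n1^2 - R2 * R1^2 - R1 * (n1 + d)^2 + R1 * R2^2 = d * (n1 - R1)^2"
    by (simp add: d_def algebra_simps power2_eq_square)
  have "0 \<le> cmod (c1 - c2)" by simp
  then have d0: "0 \<le> d" using assms(1) d_def by linarith
  have "0 \<le> d * (n1 - R1)^2" using d0 by simp
  moreover have g: "R1 * (n2^2 - R2^2) = R1 * n2^2 - R1 * R2^2" by (simp add: algebra_simps)
  moreover have h: "R2 * (n1^2 - R1^2) = R2 * n1^2 - R2 * R1^2" by (simp add: algebra_simps)
  ultimately have "R1 * (n2^2 - R2^2) \<le> R2 * (n1^2 - R1^2)" using a b by linarith
  then show ?thesis by (simp add: n1_def n2_def)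
qed

lemma log_disk_incl:
  fixes a1 a2 B1 B2 r1 r2 :: real
  defines "s1 \<equiv> r1^2 - B1^2" and "s2 \<equiv> r2^2 - B2^2"
  assumes adm1: "0 \<le> s1 \<Longrightarrow> sqrt s1 < a1" and adm2: "0 \<le> s2 \<Longrightarrow> sqrt s2 < a2"
    and B: "0 \<le> B1" "0 \<le> B2" and r: "0 \<le> r1"
    and H: "(a1 - a2)^2 + (B1 - B2)^2 \<le> (r2 - r1)^2" "r1 \<le> r2"
  shows "cmod (Complex (lal a1 s1 - lal a2 s2) (lbe a1 s1 * B1 - lbe a2 s2 * B2))
           \<le> lbe a2 s2 * r2 - lbe a1 s1 * r1"
proof -
  define g1 where "g1 = (\<lambda>t. ((a1 - 1) * (1 + t * (a1 - 1)) - t * s1) / ((1 + t * (a1 - 1))\<^sup>2 - t\<^sup>2 * s1))"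
  define g2 where "g2 = (\<lambda>t. ((a2 - 1) * (1 + t * (a2 - 1)) - t * s2) / ((1 + t * (a2 - 1))\<^sup>2 - t\<^sup>2 * s2))"
  define h1 where "h1 = (\<lambda>t. 1 / ((1 + t * (a1 - 1))\<^sup>2 - t\<^sup>2 * s1))"
  define h2 where "h2 = (\<lambda>t. 1 / ((1 + t * (a2 - 1))\<^sup>2 - t\<^sup>2 * s2))"
  have Ig1: "(g1 has_integral lal a1 s1) {0..1}" unfolding g1_def by (rule integ_g[OF adm1])
  have Ig2: "(g2 has_integral lal a2 s2) {0..1}" unfolding g2_def by (rule integ_g[OF adm2])
  have Ih1: "(h1 has_integral lbe a1 s1) {0..1}" unfolding h1_def by (rule integ_h[OF adm1])
  have Ih2: "(h2 has_integral lbe a2 s2) {0..1}" unfolding h2_def by (rule integ_h[OF adm2])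
  define F where "F = (\<lambda>t. complex_of_real (g1 t - g2 t) + \<i> * complex_of_real (B1 * h1 t - B2 * h2 t))"
  define \<rho> where "\<rho> = (\<lambda>t. r2 * h2 t - r1 * h1 t)"
  have IF: "(F has_integral (complex_of_real (lal a1 s1 - lal a2 s2) + \<i> * complex_of_real (B1 * lbe a1 s1 - B2 * lbe a2 s2))) {0..1}"
    unfolding F_def
    by (intro has_integral_add has_integral_of_real has_integral_diff has_integral_mult_right Ig1 Ig2 Ih1 Ih2)
  have I\<rho>: "(\<rho> has_integral (r2 * lbe a2 s2 - r1 * lbe a1 s1)) {0..1}"
    unfolding \<rho>_def by (intro has_integral_diff has_integral_mult_right Ih1 Ih2)
  have pw: "norm (F t) \<le> \<rho> t" if t: "t \<in> {0..1}" for t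
  proof -
    have t0: "0 \<le> t" and t1: "t \<le> 1" using t by auto
    define P1 where "P1 = (1 + t * (a1 - 1))\<^sup>2 - t\<^sup>2 * s1"
    define P2 where "P2 = (1 + t * (a2 - 1))\<^sup>2 - t\<^sup>2 * s2"
    have P1p: "0 < P1" unfolding P1_def by (rule Pt_pos[OF adm1 t0 t1])
    have P2p: "0 < P2" unfolding P2_def by (rule Pt_pos[OF adm2 t0 t1])
    have h1e: "h1 t = 1 / P1" by (simp add: h1_def P1_def)
    have h2e: "h2 t = 1 / P2" by (simp add: h2_def P2_def)
    have rad: "r1 * h1 t \<le> r2 * h2 t"
    proof (cases "t = 0")
      case True then show ?thesis using H(2) by (simp add: h1_def h2_def)
    next
      case False
      then have tp: "0 < t" using t0 by simp
      define c1 where "c1 = Complex (1 + t * (a1 - 1)) (t * B1)"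
      define c2 where "c2 = Complex (1 + t * (a2 - 1)) (t * B2)"
      have n1: "(cmod c1)^2 = (1 + t * (a1 - 1))^2 + (t * B1)^2" by (simp add: c1_def cmod_def)
      have n2: "(cmod c2)^2 = (1 + t * (a2 - 1))^2 + (t * B2)^2" by (simp add: c2_def cmod_def)
      have e1: "P1 = (cmod c1)^2 - (t * r1)^2" unfolding n1 P1_def s1_def by (simp add: algebra_simps power2_eq_square)
      have e2: "P2 = (cmod c2)^2 - (t * r2)^2" unfolding n2 P2_def s2_def by (simp add: algebra_simps power2_eq_square)
      have "cmod (c1 - c2) = sqrt ((t * (a1 - a2))^2 + (t * (B1 - B2))^2)"
        by (simp add: c1_def c2_def cmod_def algebra_simps)
      also have "\<dots> = t * sqrt ((a1 - a2)^2 + (B1 - B2)^2)"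
        using t0 by (simp add: power_mult_distrib real_sqrt_mult distrib_left[symmetric])
      also have "\<dots> \<le> t * (r2 - r1)"
      proof -
        have "sqrt ((a1 - a2)^2 + (B1 - B2)^2) \<le> sqrt ((r2 - r1)^2)" using H(1) by (rule real_sqrt_le_mono)
        also have "\<dots> = r2 - r1" using H(2) by simp
        finally show ?thesis using t0 by (simp add: mult_left_mono)
      qed
      finally have cc: "cmod (c1 - c2) \<le> t * r2 - t * r1" by (simp add: algebra_simps)
      have "t * r1 * ((cmod c2)^2 - (t * r2)^2) \<le> t * r2 * ((cmod c1)^2 - (t * r1)^2)"
        by (rule rad_mono[OF cc]) (use r t0 P2p e2 in auto)
      then have "t * (r1 * P2) \<le> t * (r2 * P1)" unfolding e1 e2 by (simp add: algebra_simps)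
      then have "r1 * P2 \<le> r2 * P1" using tp by simp
      then show ?thesis using P1p P2p unfolding h1e h2e by (simp add: field_simps)
    qed
    have id: "(g1 t - g2 t)^2 + (B1 * h1 t - B2 * h2 t)^2 - (r2 * h2 t - r1 * h1 t)^2
        = h1 t * h2 t * ((a1 - a2)^2 + (B1 - B2)^2 - (r2 - r1)^2)"
      unfolding g1_def g2_def h1_def h2_def s1_def s2_def
      by (rule key_identity) (use P1p P2p in \<open>simp_all add: P1_def P2_def s1_def s2_def\<close>)
    have "0 < h1 t * h2 t" using P1p P2p h1e h2e by simp
    moreover have "(a1 - a2)^2 + (B1 - B2)^2 - (r2 - r1)^2 \<le> 0" using H(1) by simp
    ultimately have "h1 t * h2 t * ((a1 - a2)^2 + (B1 - B2)^2 - (r2 - r1)^2) \<le> 0"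
      by (intro mult_nonneg_nonpos) auto
    then have sq: "(g1 t - g2 t)^2 + (B1 * h1 t - B2 * h2 t)^2 \<le> (\<rho> t)^2"
      using id by (simp add: \<rho>_def)
    have "norm (F t) = sqrt ((g1 t - g2 t)^2 + (B1 * h1 t - B2 * h2 t)^2)"
      by (simp add: F_def cmod_def)
    also have "\<dots> \<le> sqrt ((\<rho> t)^2)" using sq by (rule real_sqrt_le_mono)
    also have "\<dots> = \<rho> t" using rad by (simp add: \<rho>_def)
    finally show ?thesis .
  qed
  have "norm (integral {0..1} F) \<le> integral {0..1} \<rho>"
    by (rule integral_norm_bound_integral) (use IF I\<rho> pw in blast)+
  then have "norm (complex_of_real (lal a1 s1 - lal a2 s2) + \<i> * complex_of_real (B1 * lbe a1 s1 - B2 * lbe a2 s2))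
      \<le> r2 * lbe a2 s2 - r1 * lbe a1 s1"
    using integral_unique[OF IF] integral_unique[OF I\<rho>] by simp
  moreover have "complex_of_real (lal a1 s1 - lal a2 s2) + \<i> * complex_of_real (B1 * lbe a1 s1 - B2 * lbe a2 s2)
      = Complex (lal a1 s1 - lal a2 s2) (lbe a1 s1 * B1 - lbe a2 s2 * B2)"
    by (simp add: complex_eq_iff)
  ultimately show ?thesis by (simp add: mult.commute)
qed

definition cv :: "real^2 \<Rightarrow> complex" where "cv v = Complex (v$1) (v$2)"

lemma norm_cv: "norm v = cmod (cv v)"
  by (simp add: norm_vec_def L2_set_def sum_2 cv_def cmod_def)

lemma cv_mult: "cv (X *v v) = Complex (coef_a X) (coef_b X) * cv v + Complex (coef_c X) (coef_d X) * cnj (cv v)"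
  by (simp add: cv_def matrix_vector_mult_def sum_2 coef_a_def coef_b_def coef_c_def coef_d_def
      complex_eq_iff field_simps)

lemma align_witness:
  fixes z w :: complex
  obtains \<zeta> where "\<zeta> \<noteq> 0" "cmod (z * \<zeta> + w * cnj \<zeta>) = (cmod z + cmod w) * cmod \<zeta>"
proof (cases "z * cnj w = 0")
  case True
  then have "z = 0 \<or> w = 0" by simp
  then have "cmod (z * 1 + w * cnj 1) = (cmod z + cmod w) * cmod 1" by auto
  then show ?thesis using that[of 1] by simp
next
  case False
  define q where "q = csqrt (z * cnj w)"
  have q2: "q * q = z * cnj w" using power2_csqrt[of "z * cnj w"] by (simp add: q_def power2_eq_square)
  have q0: "q \<noteq> 0" using False q2 by auto
  have qq: "q * cnj q = of_real ((cmod q)^2)" by (rule complex_norm_square[symmetric])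
  have ww: "w * cnj w = of_real ((cmod w)^2)" by (rule complex_norm_square[symmetric])
  have nq: "(cmod q)^2 = cmod z * cmod w"
  proof -
    have "cmod (q * q) = cmod z * cmod w" using q2 by (simp add: norm_mult)
    then show ?thesis by (simp add: norm_mult power2_eq_square)
  qed
  have "q * (z * cnj q + w * cnj (cnj q)) = z * (q * cnj q) + w * (q * q)" by (simp add: algebra_simps)
  also have "\<dots> = z * (of_real (cmod z * cmod w) + of_real ((cmod w)^2))"
    using qq q2 nq ww by (simp add: algebra_simps)
  finally have E: "q * (z * cnj q + w * cnj (cnj q)) = z * of_real (cmod z * cmod w + (cmod w)^2)" by simp
  have "cmod q * cmod (z * cnj q + w * cnj (cnj q)) = cmod z * (cmod z * cmod w + (cmod w)^2)"
  proof -
    have nn: "cmod (complex_of_real (cmod z * cmod w + (cmod w)^2)) = cmod z * cmod w + (cmod w)^2"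
      by (subst norm_of_real) simp
    show ?thesis using arg_cong[OF E, of cmod] by (simp only: norm_mult nn)
  qed
  also have "\<dots> = (cmod q)^2 * (cmod z + cmod w)" unfolding nq by (simp add: algebra_simps power2_eq_square)
  finally have "cmod q * cmod (z * cnj q + w * cnj (cnj q)) = cmod q * ((cmod z + cmod w) * cmod q)"
    by (simp add: power2_eq_square algebra_simps)
  then have "cmod (z * cnj q + w * cnj (cnj q)) = (cmod z + cmod w) * cmod (cnj q)" using q0 by simp
  moreover have "cnj q \<noteq> 0" using q0 by simp
  ultimately show ?thesis using that by blast
qed

lemma opnorm2_formula:
  "opnorm2 X = cmod (Complex (coef_a X) (coef_b X)) + cmod (Complex (coef_c X) (coef_d X))"
proof -
  define z where "z = Complex (coef_a X) (coef_b X)"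
  define w where "w = Complex (coef_c X) (coef_d X)"
  have up: "norm (X *v v) \<le> (cmod z + cmod w) * norm v" for v
  proof -
    have "norm (X *v v) = cmod (z * cv v + w * cnj (cv v))" by (simp add: norm_cv cv_mult z_def w_def)
    also have "\<dots> \<le> cmod (z * cv v) + cmod (w * cnj (cv v))" by (rule norm_triangle_ineq)
    also have "\<dots> = (cmod z + cmod w) * norm v" by (simp add: norm_mult norm_cv algebra_simps)
    finally show ?thesis .
  qed
  have le: "opnorm2 X \<le> cmod z + cmod w" unfolding opnorm2_def by (rule onorm_le) (rule up)
  obtain \<zeta> where z0: "\<zeta> \<noteq> 0" and ze: "cmod (z * \<zeta> + w * cnj \<zeta>) = (cmod z + cmod w) * cmod \<zeta>"
    by (rule align_witness)
  define v :: "real^2" where "v = vector [Re \<zeta>, Im \<zeta>]"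
  have cvv: "cv v = \<zeta>" by (simp add: v_def cv_def complex_eq_iff)
  have "(cmod z + cmod w) * norm v = norm (X *v v)"
    using ze by (simp add: norm_cv cv_mult cvv z_def w_def)
  also have "\<dots> \<le> opnorm2 X * norm v" unfolding opnorm2_def by (rule onorm) simp
  finally have "(cmod z + cmod w) * norm v \<le> opnorm2 X * norm v" .
  moreover have "norm v > 0" using z0 by (simp add: norm_cv cvv)
  ultimately have "cmod z + cmod w \<le> opnorm2 X" by simp
  with le show ?thesis by (simp add: z_def w_def)
qed

lemma det_coef: "det X = (cmod (Complex (coef_a X) (coef_b X)))^2 - (cmod (Complex (coef_c X) (coef_d X)))^2"
  unfolding cmod_power2 complex.sel
  by (simp add: det_2 coef_a_def coef_b_def coef_c_def coef_d_def power2_eq_square field_simps)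

lemma floor2_formula:
  "floor2 X = cmod (Complex (coef_a X) (coef_b X)) - cmod (Complex (coef_c X) (coef_d X))"
proof (cases "X = 0")
  case True then show ?thesis by (simp add: floor2_def coef_a_def coef_b_def coef_c_def coef_d_def)
next
  case False
  define p where "p = cmod (Complex (coef_a X) (coef_b X))"
  define q where "q = cmod (Complex (coef_c X) (coef_d X))"
  have "p + q \<noteq> 0"
  proof
    assume "p + q = 0"
    moreover have "0 \<le> p" "0 \<le> q" by (simp_all add: p_def q_def)
    ultimately have "p = 0" "q = 0" by linarith+
    then have "Complex (coef_a X) (coef_b X) = 0" "Complex (coef_c X) (coef_d X) = 0"
      by (simp_all add: p_def q_def del: Complex_eq_0)
    then have "coef_a X = 0" "coef_b X = 0" "coef_c X = 0" "coef_d X = 0"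
      by (simp_all add: Complex_eq_0)
    then have "X = 0" by (simp add: vec_eq_iff forall_2 coef_a_def coef_b_def coef_c_def coef_d_def)
    with False show False by simp
  qed
  then have "floor2 X = (p^2 - q^2) / (p + q)"
    using False by (simp add: floor2_def opnorm2_formula det_coef p_def q_def)
  also have "\<dots> = p - q" using \<open>p + q \<noteq> 0\<close> by (simp add: power2_eq_square field_simps)
  finally show ?thesis by (simp add: p_def q_def)
qed

lemma NN_sq:
  fixes A :: rmat2
  defines "N \<equiv> A - coef_a A *\<^sub>R mat 1"
  shows "N ** N = ((coef_c A)^2 + (coef_d A)^2 - (coef_b A)^2) *\<^sub>R mat 1"
  unfolding mat_eq2 mmult2
  by (simp add: N_def coef_a_def coef_b_def coef_c_def coef_d_def power2_eq_square field_simps)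

lemma adm_of_hyp:
  fixes A :: rmat2
  defines "s \<equiv> (coef_c A)^2 + (coef_d A)^2 - (coef_b A)^2"
  assumes hyp: "\<forall>z \<in> eigenvalues2 A. \<not> (Im z = 0 \<and> Re z \<le> 0)"
  shows "0 \<le> s \<Longrightarrow> sqrt s < coef_a A"
proof -
  assume s0: "0 \<le> s"
  define z where "z = complex_of_real (coef_a A - sqrt s)"
  have "(z - of_real (A$1$1)) * (z - of_real (A$2$2)) = of_real (A$1$2 * A$2$1)"
  proof -
    have "(coef_a A - sqrt s - A$1$1) * (coef_a A - sqrt s - A$2$2) = A$1$2 * A$2$1"
    proof -
      have ss: "sqrt s * sqrt s = s" using s0 by simp
      have "(coef_a A - sqrt s - A$1$1) * (coef_a A - sqrt s - A$2$2)
           = sqrt s * sqrt s - (coef_c A)^2"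
        by (simp add: coef_a_def coef_c_def power2_eq_square field_simps)
      also have "\<dots> = A$1$2 * A$2$1" unfolding ss
        by (simp add: s_def coef_b_def coef_c_def coef_d_def power2_eq_square field_simps)
      finally show ?thesis .
    qed
    then show ?thesis unfolding z_def by (simp flip: of_real_diff of_real_mult)
  qed
  then have "z \<in> eigenvalues2 A" by (simp add: eig_char)
  with hyp have "\<not> (Im z = 0 \<and> Re z \<le> 0)" by blast
  then show "sqrt s < coef_a A" by (simp add: z_def)
qed

lemma coef_a_form:
  assumes "M$1$1 + M$2$2 = 0"
  shows "coef_a (P *\<^sub>R mat 1 + Q *\<^sub>R M) = P"
  using assms by (simp add: coef_a_def field_simps) (metis distrib_left mult_zero_right)

lemma mlog_char:
  fixes A :: rmat2
  defines "a \<equiv> coef_a A" and "s \<equiv> (coef_c A)^2 + (coef_d A)^2 - (coef_b A)^2"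
  defines "N \<equiv> A - coef_a A *\<^sub>R mat 1"
  assumes hyp: "\<forall>z \<in> eigenvalues2 A. \<not> (Im z = 0 \<and> Re z \<le> 0)"
  shows "mlog A = lal a s *\<^sub>R mat 1 + lbe a s *\<^sub>R N"
proof -
  have adm: "0 \<le> s \<Longrightarrow> sqrt s < a" using adm_of_hyp[OF hyp] by (simp add: a_def s_def)
  have NN: "N ** N = s *\<^sub>R mat 1" unfolding N_def s_def by (rule NN_sq)
  have AN: "A = a *\<^sub>R mat 1 + N" by (simp add: N_def a_def)
  define \<alpha> where "\<alpha> = lal a s"
  define \<beta> where "\<beta> = lbe a s"
  define e where "e = ee s"
  have esq: "e^2 = of_real s" by (simp add: e_def ee_sq)
  note K = Kfacts[OF adm, folded \<alpha>_def \<beta>_def e_def]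
  note KL = Kln[OF adm, folded \<alpha>_def \<beta>_def e_def]
  define L0 where "L0 = \<alpha> *\<^sub>R mat 1 + \<beta> *\<^sub>R N"
  have MM0: "(\<beta> *\<^sub>R N) ** (\<beta> *\<^sub>R N) = (\<beta>^2 * s) *\<^sub>R mat 1"
    by (simp add: matrix_scalar_ac scalar_matrix_assoc[symmetric] NN power2_eq_square)
  obtain P Q where mf: "mexp (\<alpha> *\<^sub>R mat 1 + \<beta> *\<^sub>R N) = P *\<^sub>R mat 1 + Q *\<^sub>R (\<beta> *\<^sub>R N)"
    and ex: "\<And>\<omega>::complex. \<omega>\<^sup>2 = of_real (\<beta>^2 * s) \<Longrightarrow> exp (of_real \<alpha> + \<omega>) = of_real P + of_real Q * \<omega>"
    and q0: "\<beta>^2 * s = 0 \<Longrightarrow> Q = exp \<alpha>"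
    using mexp_form[OF MM0, where x=\<alpha>] by blast
  have w1: "(of_real \<beta> * e)\<^sup>2 = complex_of_real (\<beta>^2 * s)" using esq by (simp add: power_mult_distrib)
  have w2: "(- (of_real \<beta> * e))\<^sup>2 = complex_of_real (\<beta>^2 * s)" using w1 by simp
  have x1: "of_real P + of_real Q * (of_real \<beta> * e) = of_real a + e"
    using ex[OF w1] K(1) by simp
  have "exp (of_real \<alpha> - of_real \<beta> * e) = of_real P - of_real Q * (of_real \<beta> * e)"
    using ex[OF w2] by simp
  then have x2: "of_real P - of_real Q * (of_real \<beta> * e) = of_real a - e"
    using K(2) by simp
  have Pa: "P = a"
  proof -
    have "complex_of_real P = complex_of_real a" using x1 x2 by algebra
    then show ?thesis by simp
  qed
  have Qbe: "of_real (Q * \<beta>) * e = e" using x1 Pa by (simp add: algebra_simps)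
  have Qb: "Q * \<beta> = 1"
  proof (cases "s = 0")
    case True
    have a0: "a > 0" using adm True by simp
    have "Q = exp \<alpha>" using q0 True by simp
    also have "\<dots> = a" using True a0 by (simp add: \<alpha>_def lal_def)
    finally show ?thesis using True a0 by (simp add: \<beta>_def lbe_def)
  next
    case False
    then have en: "e \<noteq> 0" by (simp add: e_def ee_zero_iff)
    from Qbe have "e = 0 \<or> complex_of_real (Q * \<beta>) = 1" by (simp only: mult_cancel_right2)
    then have "complex_of_real (Q * \<beta>) = 1" using en by blast
    then show ?thesis by (simp only: of_real_eq_1_iff)
  qed
  have L0exp: "mexp L0 = A"
    unfolding L0_def mf AN Pa using Qb by (simp add: scaleR_scaleR)
  have L0strip: "\<forall>z \<in> eigenvalues2 L0. \<bar>Im z\<bar> < pi"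
  proof
    fix z assume "z \<in> eigenvalues2 L0"
    then have ch: "(z - of_real (L0$1$1)) * (z - of_real (L0$2$2)) = of_real (L0$1$2 * L0$2$1)"
      by (simp add: eig_char)
    have "(z - of_real \<alpha> - of_real \<beta> * e) * (z - of_real \<alpha> + of_real \<beta> * e)
        = (z - of_real (L0$1$1)) * (z - of_real (L0$2$2)) - of_real (L0$1$2 * L0$2$1)"
    proof -
      have "(z - of_real \<alpha> - of_real \<beta> * e) * (z - of_real \<alpha> + of_real \<beta> * e)
          = (z - of_real \<alpha>)^2 - (of_real \<beta>)^2 * of_real s"
        using esq by (simp add: power2_eq_square algebra_simps)
      also have "\<dots> = (z - of_real (L0$1$1)) * (z - of_real (L0$2$2)) - of_real (L0$1$2 * L0$2$1)"
        by (simp add: L0_def N_def s_def coef_a_def coef_b_def coef_c_def coef_d_def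
            power2_eq_square field_simps)
      finally show ?thesis .
    qed
    then have "(z - of_real \<alpha> - of_real \<beta> * e) * (z - of_real \<alpha> + of_real \<beta> * e) = 0"
      using ch by simp
    then have "z - of_real \<alpha> - of_real \<beta> * e = 0 \<or> z - of_real \<alpha> + of_real \<beta> * e = 0"
      by (simp only: mult_eq_0_iff)
    then have "z = of_real \<alpha> + of_real \<beta> * e \<or> z = of_real \<alpha> - of_real \<beta> * e"
    proof (elim disjE)
      assume "z - of_real \<alpha> - of_real \<beta> * e = 0"
      then have "z = of_real \<alpha> + of_real \<beta> * e" by algebra
      then show ?thesis ..
    next
      assume "z - of_real \<alpha> + of_real \<beta> * e = 0"
      then have "z = of_real \<alpha> - of_real \<beta> * e" by algebra
      then show ?thesis ..
    qed
    then show "\<bar>Im z\<bar> < pi" using K(3,4) by auto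
  qed
  have uniq: "L = L0" if Lexp: "mexp L = A" and Lstrip: "\<forall>z \<in> eigenvalues2 L. \<bar>Im z\<bar> < pi" for L
  proof -
    define x where "x = (L$1$1 + L$2$2) / 2"
    define M where "M = L - x *\<^sub>R mat 1"
    define \<sigma> where "\<sigma> = ((L$1$1 - L$2$2) / 2)^2 + L$1$2 * L$2$1"
    have LM: "L = x *\<^sub>R mat 1 + M" by (simp add: M_def)
    have tr: "M$1$1 + M$2$2 = 0" by (simp add: M_def x_def)
    have MM: "M ** M = \<sigma> *\<^sub>R mat 1"
      unfolding mat_eq2 mmult2 by (simp add: M_def x_def \<sigma>_def power2_eq_square field_simps)
    obtain P Q where mf: "mexp (x *\<^sub>R mat 1 + M) = P *\<^sub>R mat 1 + Q *\<^sub>R M"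
      and ex: "\<And>\<omega>::complex. \<omega>\<^sup>2 = of_real \<sigma> \<Longrightarrow> exp (of_real x + \<omega>) = of_real P + of_real Q * \<omega>"
      and q0: "\<sigma> = 0 \<Longrightarrow> Q = exp x"
      using mexp_form[OF MM, where x=x] by blast
    have AL: "A = P *\<^sub>R mat 1 + Q *\<^sub>R M" using Lexp mf LM by simp
    have Pa: "P = a" using coef_a_form[OF tr, of P Q] AL by (simp add: a_def)
    have AP: "A - P *\<^sub>R mat 1 = Q *\<^sub>R M" unfolding AL by simp
    have NQ: "N = Q *\<^sub>R M" using AP Pa by (simp add: N_def a_def)
    have sQ: "s = Q^2 * \<sigma>"
    proof -
      have E: "(Q^2 * \<sigma>) *\<^sub>R (mat 1::rmat2) = s *\<^sub>R mat 1"
        using NN unfolding NQ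
        by (simp add: matrix_scalar_ac scalar_matrix_assoc[symmetric] MM power2_eq_square)
      show ?thesis using arg_cong[OF E, of "\<lambda>X. X$1$1"] by simp
    qed
    have eigs: "\<bar>Im (of_real x + \<omega>)\<bar> < pi" if w: "\<omega>\<^sup>2 = of_real \<sigma>" for \<omega> :: complex
    proof -
      have "(of_real x + \<omega> - of_real (L$1$1)) * (of_real x + \<omega> - of_real (L$2$2)) = of_real (L$1$2 * L$2$1)"
      proof -
        have "(of_real x + \<omega> - of_real (L$1$1)) * (of_real x + \<omega> - of_real (L$2$2))
            = \<omega>^2 - (of_real ((L$1$1 - L$2$2) / 2))^2"
          by (simp add: x_def power2_eq_square field_simps)
        also have "\<dots> = of_real (L$1$2 * L$2$1)" unfolding w
          by (simp add: \<sigma>_def power2_eq_square field_simps)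
        finally show ?thesis .
      qed
      then have "of_real x + \<omega> \<in> eigenvalues2 L" by (simp add: eig_char)
      then show ?thesis using Lstrip by blast
    qed
    show "L = L0"
    proof (cases "\<sigma> = 0")
      case True
      have "exp (complex_of_real x + 0) = complex_of_real P + complex_of_real Q * 0" by (rule ex) (simp add: True)
      then have Pe: "P = exp x" by (simp add: exp_of_real)
      have Qe: "Q = exp x" using q0 True by simp
      have ae: "a = exp x" using Pa Pe by simp
      have s0: "s = 0" using sQ True by simp
      have "\<alpha> = x" using s0 ae by (simp add: \<alpha>_def lal_def)
      moreover have "\<beta> *\<^sub>R N = M" using s0 ae NQ Qe by (simp add: \<beta>_def lbe_def scaleR_scaleR)
      ultimately show ?thesis using LM by (simp add: L0_def)
    next
      case False
      define \<omega>0 where "\<omega>0 = csqrt (of_real \<sigma>)"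
      have w0: "\<omega>0\<^sup>2 = of_real \<sigma>" by (simp add: \<omega>0_def)
      have w0n: "\<omega>0 \<noteq> 0" using w0 False by auto
      have "(of_real Q * \<omega>0)^2 = e^2" using w0 esq sQ by (simp add: power_mult_distrib)
      then have "of_real Q * \<omega>0 = e \<or> of_real Q * \<omega>0 = - e" by (simp add: power2_eq_iff)
      then obtain \<omega> where w: "\<omega>\<^sup>2 = of_real \<sigma>" and wn: "\<omega> \<noteq> 0" and Qw: "of_real Q * \<omega> = e"
      proof
        assume "of_real Q * \<omega>0 = e" then show ?thesis using that[of \<omega>0] w0 w0n by blast
      next
        assume "of_real Q * \<omega>0 = - e" then show ?thesis using that[of "- \<omega>0"] w0 w0n by simp
      qed
      have wm: "(- \<omega>)\<^sup>2 = of_real \<sigma>" using w by simp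
      have e1: "exp (of_real x + \<omega>) = of_real a + e" using ex[OF w] Qw Pa by simp
      have e2: "exp (of_real x - \<omega>) = of_real a - e" using ex[OF wm] Qw Pa by (simp add: algebra_simps)
      have i1: "\<bar>Im (of_real x + \<omega>)\<bar> < pi" by (rule eigs[OF w])
      have i2: "\<bar>Im (of_real x - \<omega>)\<bar> < pi" using eigs[OF wm] by simp
      have "Ln (of_real a + e) = of_real x + \<omega>" by (rule Ln_unique[OF e1]) (use i1 in auto)
      then have l1: "of_real x + \<omega> = of_real \<alpha> + of_real \<beta> * e" using KL(1) by simp
      have "Ln (of_real a - e) = of_real x - \<omega>" by (rule Ln_unique[OF e2]) (use i2 in auto)
      then have l2: "of_real x - \<omega> = of_real \<alpha> - of_real \<beta> * e" using KL(2) by simp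
      have "complex_of_real x = of_real \<alpha>" using l1 l2 by algebra
      then have xa: "x = \<alpha>" by simp
      have wb: "\<omega> = of_real \<beta> * e" using l1 xa by simp
      have en: "e \<noteq> 0" using wn wb by auto
      have "of_real (Q * \<beta>) * e = e" using Qw wb by (simp add: algebra_simps)
      then have "e = 0 \<or> complex_of_real (Q * \<beta>) = 1" by (simp only: mult_cancel_right2)
      then have "complex_of_real (Q * \<beta>) = 1" using en by blast
      then have "Q * \<beta> = 1" by (simp only: of_real_eq_1_iff)
      then have "\<beta> *\<^sub>R N = M" using NQ by (simp add: scaleR_scaleR mult.commute)
      then show ?thesis using LM xa by (simp add: L0_def)
    qed
  qed
  have "mlog A = L0"
    unfolding mlog_def by (rule the_equality) (use L0exp L0strip uniq in blast)+
  then show ?thesis by (simp add: L0_def \<alpha>_def \<beta>_def)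
qed

lemma lbe_nonneg:
  assumes adm: "0 \<le> s \<Longrightarrow> sqrt s < a"
  shows "0 \<le> lbe a s"
proof (rule has_integral_nonneg[OF integ_h[OF adm]])
  fix t :: real assume "t \<in> {0..1}"
  then have "0 < (1 + t * (a - 1))\<^sup>2 - t\<^sup>2 * s" using Pt_pos[OF adm] by auto
  then show "0 \<le> 1 / ((1 + t * (a - 1))\<^sup>2 - t\<^sup>2 * s)" by simp
qed

lemma log_norms:
  fixes A :: rmat2
  defines "a \<equiv> coef_a A" and "s \<equiv> (coef_c A)^2 + (coef_d A)^2 - (coef_b A)^2"
  assumes hyp: "\<forall>z \<in> eigenvalues2 A. \<not> (Im z = 0 \<and> Re z \<le> 0)"
  shows "opnorm2 (mlog A) = cmod (Complex (lal a s) (lbe a s * \<bar>coef_b A\<bar>)) + lbe a s * sqrt ((coef_c A)^2 + (coef_d A)^2)"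
    and "floor2 (mlog A) = cmod (Complex (lal a s) (lbe a s * \<bar>coef_b A\<bar>)) - lbe a s * sqrt ((coef_c A)^2 + (coef_d A)^2)"
proof -
  have adm: "0 \<le> s \<Longrightarrow> sqrt s < a" using adm_of_hyp[OF hyp] by (simp add: a_def s_def)
  have b0: "0 \<le> lbe a s" by (rule lbe_nonneg[OF adm])
  define L where "L = mlog A"
  have L: "L = lal a s *\<^sub>R mat 1 + lbe a s *\<^sub>R (A - coef_a A *\<^sub>R mat 1)"
    unfolding L_def a_def s_def by (rule mlog_char[OF hyp])
  have ca: "coef_a L = lal a s" by (simp add: L coef_a_def a_def field_simps)
  have cb: "coef_b L = lbe a s * coef_b A" by (simp add: L coef_b_def field_simps)
  have cc: "coef_c L = lbe a s * coef_c A" by (simp add: L coef_c_def field_simps)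
  have cd: "coef_d L = lbe a s * coef_d A" by (simp add: L coef_d_def field_simps)
  have n1: "cmod (Complex (coef_a L) (coef_b L)) = cmod (Complex (lal a s) (lbe a s * \<bar>coef_b A\<bar>))"
    by (simp add: ca cb cmod_def power_mult_distrib)
  have n2: "cmod (Complex (coef_c L) (coef_d L)) = lbe a s * sqrt ((coef_c A)^2 + (coef_d A)^2)"
  proof -
    have "cmod (Complex (coef_c L) (coef_d L)) = sqrt ((lbe a s)^2 * ((coef_c A)^2 + (coef_d A)^2))"
      by (simp add: cc cd cmod_def power_mult_distrib algebra_simps)
    also have "\<dots> = lbe a s * sqrt ((coef_c A)^2 + (coef_d A)^2)" using b0 by (simp add: real_sqrt_mult)
    finally show ?thesis .
  qed
  show "opnorm2 (mlog A) = cmod (Complex (lal a s) (lbe a s * \<bar>coef_b A\<bar>)) + lbe a s * sqrt ((coef_c A)^2 + (coef_d A)^2)"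
    using opnorm2_formula[of L] n1 n2 by (simp add: L_def)
  show "floor2 (mlog A) = cmod (Complex (lal a s) (lbe a s * \<bar>coef_b A\<bar>)) - lbe a s * sqrt ((coef_c A)^2 + (coef_d A)^2)"
    using floor2_formula[of L] n1 n2 by (simp add: L_def)
qed

theorem theorem10p2:
  fixes A1 A2 :: "real^2^2"
  assumes "\<forall>z \<in> eigenvalues2 A1. \<not> (Im z = 0 \<and> Re z \<le> 0)"
      and "\<forall>z \<in> eigenvalues2 A2. \<not> (Im z = 0 \<and> Re z \<le> 0)"
      and "PD A1 \<subseteq> PD A2"
  shows "opnorm2 (mlog A1) \<le> opnorm2 (mlog A2) \<and> floor2 (mlog A1) \<ge> floor2 (mlog A2)"
proof -
  define a1 where "a1 = coef_a A1"
  define a2 where "a2 = coef_a A2"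
  define B1 where "B1 = \<bar>coef_b A1\<bar>"
  define B2 where "B2 = \<bar>coef_b A2\<bar>"
  define r1 where "r1 = sqrt ((coef_c A1)^2 + (coef_d A1)^2)"
  define r2 where "r2 = sqrt ((coef_c A2)^2 + (coef_d A2)^2)"
  define s1 where "s1 = (coef_c A1)^2 + (coef_d A1)^2 - (coef_b A1)^2"
  define s2 where "s2 = (coef_c A2)^2 + (coef_d A2)^2 - (coef_b A2)^2"
  have s1r: "s1 = r1^2 - B1^2" by (simp add: s1_def r1_def B1_def)
  have s2r: "s2 = r2^2 - B2^2" by (simp add: s2_def r2_def B2_def)
  have adm1: "0 \<le> s1 \<Longrightarrow> sqrt s1 < a1" using adm_of_hyp[OF assms(1)] by (simp add: a1_def s1_def)
  have adm2: "0 \<le> s2 \<Longrightarrow> sqrt s2 < a2" using adm_of_hyp[OF assms(2)] by (simp add: a2_def s2_def)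
  have r1p: "0 \<le> r1" by (simp add: r1_def)
  have "cball (Complex a1 B1) r1 \<subseteq> cball (Complex a2 B2) r2"
    using assms(3) by (simp add: PD_def a1_def a2_def B1_def B2_def r1_def r2_def)
  then have "dist (Complex a1 B1) (Complex a2 B2) + r1 \<le> r2 \<or> r1 < 0" by (simp add: cball_subset_cball_iff)
  then have D: "dist (Complex a1 B1) (Complex a2 B2) + r1 \<le> r2" using r1p by linarith
  have dd: "dist (Complex a1 B1) (Complex a2 B2) = sqrt ((a1 - a2)^2 + (B1 - B2)^2)"
    by (simp add: dist_norm cmod_def)
  have sq0: "0 \<le> sqrt ((a1 - a2)^2 + (B1 - B2)^2)" by simp
  have Ds: "sqrt ((a1 - a2)^2 + (B1 - B2)^2) + r1 \<le> r2" using D dd by simp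
  have H2: "r1 \<le> r2" using Ds sq0 by linarith
  have Ds': "sqrt ((a1 - a2)^2 + (B1 - B2)^2) \<le> r2 - r1" using Ds by linarith
  have "(sqrt ((a1 - a2)^2 + (B1 - B2)^2))^2 \<le> (r2 - r1)^2"
    by (rule power_mono[OF Ds' sq0])
  then have H1: "(a1 - a2)^2 + (B1 - B2)^2 \<le> (r2 - r1)^2" by simp
  have incl: "cmod (Complex (lal a1 s1 - lal a2 s2) (lbe a1 s1 * B1 - lbe a2 s2 * B2))
           \<le> lbe a2 s2 * r2 - lbe a1 s1 * r1"
    unfolding s1r s2r
    by (rule log_disk_incl) (use adm1 adm2 r1p H1 H2 in \<open>simp_all add: s1r s2r B1_def B2_def\<close>)
  define z1 where "z1 = Complex (lal a1 s1) (lbe a1 s1 * B1)"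
  define z2 where "z2 = Complex (lal a2 s2) (lbe a2 s2 * B2)"
  have zd: "z1 - z2 = Complex (lal a1 s1 - lal a2 s2) (lbe a1 s1 * B1 - lbe a2 s2 * B2)"
    by (simp add: z1_def z2_def complex_eq_iff)
  have o1: "opnorm2 (mlog A1) = cmod z1 + lbe a1 s1 * r1"
    using log_norms(1)[OF assms(1)] by (simp add: z1_def a1_def s1_def B1_def r1_def)
  have o2: "opnorm2 (mlog A2) = cmod z2 + lbe a2 s2 * r2"
    using log_norms(1)[OF assms(2)] by (simp add: z2_def a2_def s2_def B2_def r2_def)
  have f1: "floor2 (mlog A1) = cmod z1 - lbe a1 s1 * r1"
    using log_norms(2)[OF assms(1)] by (simp add: z1_def a1_def s1_def B1_def r1_def)
  have f2: "floor2 (mlog A2) = cmod z2 - lbe a2 s2 * r2"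
    using log_norms(2)[OF assms(2)] by (simp add: z2_def a2_def s2_def B2_def r2_def)
  have t1: "cmod z1 \<le> cmod z2 + cmod (z1 - z2)" by (rule norm_triangle_sub)
  have t2: "cmod z2 \<le> cmod z1 + cmod (z1 - z2)"
    using norm_triangle_sub[of z2 z1] by (simp add: norm_minus_commute)
  have inc: "cmod (z1 - z2) \<le> lbe a2 s2 * r2 - lbe a1 s1 * r1" using incl zd by simp
  show ?thesis unfolding o1 o2 f1 f2 using t1 t2 inc by linarith
qed


end
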